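(* Let $m\ge 1$ and $n=2^m-1$. Let $C\subset F^m$ be a $1$-code containing $0^m$, and put $\dot C := C\setminus\{0^m\}$. Then the set $$P(C) := \Big( H \setminus \bigcup_{\iota\in \dot C}\big(R_\iota+ \hat{\iota} + \bar e^{(\iota)}\big)\Big) \cup \bigcup_{\iota\in \dot C}\big(R_\iota+ \hat{\iota}\big)$$ is a $1$-perfect code in $F^n$. Moreover, $$C=\{\iota\in F^m \mid (\iota,0^{n-m})\in P(C)\}.$$
   Context: $F^m$ denotes the vector space of binary $m$-tuples over $GF(2)$, and $\dot F^m := F^m\setminus\{0^m\}$. Let $\pi^{(1)}=(10\ldots0),\ldots,\pi^{(m)}=(0\ldots01)$ be the standard basis of $F^m$. The coordinates of words $\bar w\in F^n$ ($n=2^m-1$) are indexed by the elements of $\dot F^m$, $\bar w=\{w_\alpha\}_{\alpha\in\dot F^m}$, where the first $m$ coordinates have indices $\pi^{(1)},\ldots,\pi^{(m)}$ (in this order) and the remaining $n-m$ indices are in some fixed order. $\{\bar e^{(\iota)}\}_{\iota\in\dot F^m}$ is the standard basis of $F^n$ ($\bar e^{(\iota)}$ has a single $1$ in the coordinate indexed by $\iota$). For $\alpha\in F^m$, $\hat\alpha := (\alpha,0^{n-m})\in F^n$, i.e. $\hat\alpha=\sum_{i=1}^m \alpha_i \bar e^{(\pi^{(i)})}$. The Hamming code is $H:=\{\bar c\in F^n \mid \sum_{\alpha\in\dot F^m} c_\alpha\alpha = 0^m\}$. For $\iota\in\dot F^m$, $R_\iota := \{\bar c\in H \mid c_\alpha=c_{\alpha+\iota}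 \text{ for all } \alpha\in F^m\setminus\{0^m,\iota\}\}$. The Hamming distance is the number of differing positions; the neighborhood $\Omega(M)$ of $M$ is the set of words at distance at most $1$ from $M$. A set $C$ of words is a $1$-code if the neighborhoods of its elements are pairwise disjoint; a $1$-code $P\subset F^n$ is $1$-perfect if $\Omega(P)=F^n$. *)

theory Defs
  imports Main
begin

text \<open>Binary words with coordinates indexed by a set I: functions I-index => bool
  (bool = GF(2), True = 1), required to be False outside I.
  F^m: I = {..<m} (coordinate i corresponds to pi^(i+1)).
  F^n with n = 2^m - 1: I = the set of nonzero vectors of F^m.\<close>

definition space :: "'i set \<Rightarrow> ('i \<Rightarrow> bool) set" where
  "space I = {x. \<forall>i. i \<notin> I \<longrightarrow> \<not> x i}"

definition zw :: "'i \<Rightarrow> bool" where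
  "zw = (\<lambda>_. False)"

definition wadd :: "('i \<Rightarrow> bool) \<Rightarrow> ('i \<Rightarrow> bool) \<Rightarrow> ('i \<Rightarrow> bool)" where
  "wadd x y = (\<lambda>i. x i \<noteq> y i)"

definition hdist :: "'i set \<Rightarrow> ('i \<Rightarrow> bool) \<Rightarrow> ('i \<Rightarrow> bool) \<Rightarrow> nat" where
  "hdist I x y = card {i \<in> I. x i \<noteq> y i}"

definition nbhd :: "'i set \<Rightarrow> ('i \<Rightarrow> bool) set \<Rightarrow> ('i \<Rightarrow> bool) set" where
  "nbhd I M = {x \<in> space I. \<exists>c\<in>M. hdist I x c \<le> 1}"

definition one_code :: "'i set \<Rightarrow> ('i \<Rightarrow> bool) set \<Rightarrow> bool" where
  "one_code I C \<longleftrightarrow> C \<subseteq> space I \<and>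
     (\<forall>c\<in>C. \<forall>d\<in>C. c \<noteq> d \<longrightarrow> nbhd I {c} \<inter> nbhd I {d} = {})"

definition one_perfect :: "'i set \<Rightarrow> ('i \<Rightarrow> bool) set \<Rightarrow> bool" where
  "one_perfect I P \<longleftrightarrow> one_code I P \<and> nbhd I P = space I"

type_synonym vec = "nat \<Rightarrow> bool"
type_synonym word = "vec \<Rightarrow> bool"

abbreviation Fm :: "nat \<Rightarrow> vec set" where
  "Fm m \<equiv> space {..<m}"

definition Fdot :: "nat \<Rightarrow> vec set" where
  "Fdot m = Fm m - {zw}"

abbreviation Fn :: "nat \<Rightarrow> word set" where
  "Fn m \<equiv> space (Fdot m)"

text \<open>Hamming code: sum over alpha of c_alpha * alpha = 0 in GF(2)^m, i.e. every
  coordinate of the sum has even parity.\<close>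
definition Ham :: "nat \<Rightarrow> word set" where
  "Ham m = {c \<in> Fn m. \<forall>i<m. even (card {\<alpha> \<in> Fdot m. c \<alpha> \<and> \<alpha> i})}"

definition R :: "nat \<Rightarrow> vec \<Rightarrow> word set" where
  "R m \<iota> = {c \<in> Ham m. \<forall>\<alpha> \<in> Fm m - {zw, \<iota>}. c \<alpha> = c (wadd \<alpha> \<iota>)}"

definition unitv :: "nat \<Rightarrow> vec" where
  "unitv i = (\<lambda>j. j = i)"

text \<open>hat iota = (iota, 0^(n-m))\<close>
definition hat :: "nat \<Rightarrow> vec \<Rightarrow> word" where
  "hat m \<iota> = (\<lambda>a. \<exists>i<m. a = unitv i \<and> \<iota> i)"

definition ew :: "vec \<Rightarrow> word" where
  "ew \<iota> = (\<lambda>a. a = \<iota>)"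

definition translate :: "word set \<Rightarrow> word \<Rightarrow> word set" where
  "translate M v = (\<lambda>c. wadd c v) ` M"

definition PC :: "nat \<Rightarrow> vec set \<Rightarrow> word set" where
  "PC m C = (Ham m - (\<Union>\<iota>\<in>C - {zw}. translate (R m \<iota>) (wadd (hat m \<iota>) (ew \<iota>))))
            \<union> (\<Union>\<iota>\<in>C - {zw}. translate (R m \<iota>) (hat m \<iota>))"

end

theory Submission
  imports Defs
begin

lemma wadd_comm: "wadd x y = wadd y x" by (auto simp: wadd_def fun_eq_iff)
lemma wadd_assoc: "wadd (wadd x y) z = wadd x (wadd y z)" by (auto simp: wadd_def fun_eq_iff)
lemma wadd_lcomm: "wadd x (wadd y z) = wadd y (wadd x z)" by (auto simp: wadd_def fun_eq_iff)
lemma wadd_self[simp]: "wadd x x = zw" by (auto simp: wadd_def fun_eq_iff zw_def)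
lemma wadd_self2[simp]: "wadd x (wadd x y) = y" by (auto simp: wadd_def fun_eq_iff)
lemma wadd_zw[simp]: "wadd x zw = x" "wadd zw x = x" by (auto simp: wadd_def fun_eq_iff zw_def)
lemma wadd_eq_iff: "wadd x y = z \<longleftrightarrow> y = wadd x z" by (auto simp: wadd_def fun_eq_iff)
lemmas wadd_ac = wadd_comm wadd_assoc wadd_lcomm

lemma finite_space: "finite I \<Longrightarrow> finite (space I)"
proof -
  assume "finite I"
  have "space I \<subseteq> (\<lambda>S i. i \<in> S) ` Pow I"
  proof
    fix x assume "x \<in> space I"
    then have "x = (\<lambda>i. i \<in> {i. x i})" "{i. x i} \<subseteq> I" by (auto simp: space_def)
    then show "x \<in> (\<lambda>S i. i \<in> S) ` Pow I" by blast
  qed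
  then show ?thesis using \<open>finite I\<close> by (meson finite_Pow_iff finite_imageI finite_subset)
qed

lemma finite_Fdot[simp]: "finite (Fdot m)"
  unfolding Fdot_def by (simp add: finite_space)

lemma wadd_space: "x \<in> space I \<Longrightarrow> y \<in> space I \<Longrightarrow> wadd x y \<in> space I"
  by (auto simp: space_def wadd_def)
lemma zw_space[simp]: "zw \<in> space I" by (auto simp: space_def zw_def)

lemma parity:
  assumes "finite S"
  shows "odd (card {x\<in>S. (P x \<noteq> Q x) \<and> Rp x}) \<longleftrightarrow>
        (odd (card {x\<in>S. P x \<and> Rp x}) \<noteq> odd (card {x\<in>S. Q x \<and> Rp x}))"
  using assms
proof (induction S rule: finite_induct)
  case empty then show ?case by simp
next
  case (insert a S)
  have e: "\<And>T. {x \<in> insert a S. T x} = (if T a then insert a {x\<in>S. T x} else {x\<in>S. T x})" by auto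
  show ?case unfolding e using insert by (auto)
qed

definition syn :: "nat \<Rightarrow> word \<Rightarrow> vec" where
  "syn m c = (\<lambda>i. odd (card {\<alpha> \<in> Fdot m. c \<alpha> \<and> \<alpha> i}))"

lemma syn_wadd: "syn m (wadd c d) = wadd (syn m c) (syn m d)"
proof -
  have "\<And>i. odd (card {\<alpha> \<in> Fdot m. (c \<alpha> \<noteq> d \<alpha>) \<and> \<alpha> i}) \<longleftrightarrow>
        (odd (card {\<alpha> \<in> Fdot m. c \<alpha> \<and> \<alpha> i}) \<noteq> odd (card {\<alpha> \<in> Fdot m. d \<alpha> \<and> \<alpha> i}))"
    by (rule parity) simp
  then show ?thesis by (simp add: syn_def wadd_def fun_eq_iff)
qed

lemma syn_Fm: "syn m c \<in> Fm m"
proof -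
  have h: "\<And>i. \<not> i < m \<Longrightarrow> {\<alpha> \<in> Fdot m. c \<alpha> \<and> \<alpha> i} = {}"
    by (auto simp: Fdot_def space_def)
  show ?thesis unfolding space_def syn_def
  proof (intro CollectI allI impI)
    fix i :: nat assume "i \<notin> {..<m}"
    then have e: "{\<alpha> \<in> Fdot m. c \<alpha> \<and> \<alpha> i} = {}" using h by simp
    show "\<not> odd (card {\<alpha> \<in> Fdot m. c \<alpha> \<and> \<alpha> i})" unfolding e by simp
  qed
qed

lemma Ham_iff: "c \<in> Ham m \<longleftrightarrow> c \<in> Fn m \<and> syn m c = zw"
proof -
  have "syn m c = zw \<longleftrightarrow> (\<forall>i<m. even (card {\<alpha> \<in> Fdot m. c \<alpha> \<and> \<alpha> i}))"
    using syn_Fm[of m c] by (auto simp: syn_def zw_def fun_eq_iff space_def)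
  then show ?thesis by (auto simp: Ham_def)
qed

lemma syn_ew: "\<beta> \<in> Fdot m \<Longrightarrow> syn m (ew \<beta>) = \<beta>"
proof -
  assume b: "\<beta> \<in> Fdot m"
  have "\<And>i. {\<alpha> \<in> Fdot m. ew \<beta> \<alpha> \<and> \<alpha> i} = (if \<beta> i then {\<beta>} else {})"
    using b by (auto simp: ew_def)
  then show ?thesis by (auto simp: syn_def fun_eq_iff)
qed

lemma syn_zw[simp]: "syn m zw = zw" by (simp add: syn_def zw_def fun_eq_iff)

lemma unitv_Fdot: "i < m \<Longrightarrow> unitv i \<in> Fdot m"
  by (auto simp: Fdot_def space_def unitv_def zw_def fun_eq_iff)

lemma unitv_inj[simp]: "unitv i = unitv j \<longleftrightarrow> i = j"
  by (auto simp: unitv_def fun_eq_iff)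

lemma syn_hat: "\<iota> \<in> Fm m \<Longrightarrow> syn m (hat m \<iota>) = \<iota>"
proof -
  assume b: "\<iota> \<in> Fm m"
  have "\<And>i. {\<alpha> \<in> Fdot m. hat m \<iota> \<alpha> \<and> \<alpha> i} = (if \<iota> i then {unitv i} else {})"
  proof -
    fix i
    show "{\<alpha> \<in> Fdot m. hat m \<iota> \<alpha> \<and> \<alpha> i} = (if \<iota> i then {unitv i} else {})"
    proof (cases "\<iota> i")
      case True
      then have "i < m" using b by (auto simp: space_def)
      then show ?thesis using True unitv_Fdot[of i m] by (auto simp: hat_def unitv_def)
    next
      case False
      then show ?thesis by (auto simp: hat_def unitv_def)
    qed
  qed
  then show ?thesis by (auto simp: syn_def fun_eq_iff)
qed

lemma hat_Fn: "hat m \<iota> \<in> Fn m"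
  using unitv_Fdot by (auto simp: space_def hat_def)
lemma ew_Fn: "\<beta> \<in> Fdot m \<Longrightarrow> ew \<beta> \<in> Fn m"
  by (auto simp: space_def ew_def)

lemma near_iff:
  assumes "finite I" "x \<in> space I" "y \<in> space I"
  shows "hdist I x y \<le> 1 \<longleftrightarrow> (x = y \<or> (\<exists>\<beta>\<in>I. x = wadd y (\<lambda>a. a = \<beta>)))"
proof -
  let ?D = "{i\<in>I. x i \<noteq> y i}"
  have fD: "finite ?D" using assms by simp
  show ?thesis
  proof
    assume "hdist I x y \<le> 1"
    then have all: "\<forall>a\<in>?D. \<forall>b\<in>?D. a = b" using card_le_Suc0_iff_eq[OF fD] by (simp add: hdist_def)
    show "x = y \<or> (\<exists>\<beta>\<in>I. x = wadd y (\<lambda>a. a = \<beta>))"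
    proof (cases "?D = {}")
      case True
      then have "x = y" using assms(2,3) by (auto simp: space_def fun_eq_iff)
      then show ?thesis by simp
    next
      case False
      then obtain b where b: "b \<in> ?D" by blast
      have "x = wadd y (\<lambda>a. a = b)"
        using all b assms(2,3) by (auto simp: space_def fun_eq_iff wadd_def)
      then show ?thesis using b by blast
    qed
  next
    assume h: "x = y \<or> (\<exists>\<beta>\<in>I. x = wadd y (\<lambda>a. a = \<beta>))"
    show "hdist I x y \<le> 1"
    proof (cases "x = y")
      case True then show ?thesis by (simp add: hdist_def)
    next
      case False
      then obtain b where "b \<in> I" "x = wadd y (\<lambda>a. a = b)" using h by blast
      then have "?D = {b}" by (auto simp: wadd_def)
      then show ?thesis by (simp add: hdist_def)
    qed
  qed
qed

abbreviation near :: "nat \<Rightarrow> word \<Rightarrow> word \<Rightarrow> bool" where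
  "near m x y \<equiv> hdist (Fdot m) x y \<le> 1"

lemma near_iff2:
  "x \<in> Fn m \<Longrightarrow> y \<in> Fn m \<Longrightarrow> near m x y \<longleftrightarrow> (x = y \<or> (\<exists>\<beta>\<in>Fdot m. x = wadd y (ew \<beta>)))"
  using near_iff[of "Fdot m" x y] by (simp add: ew_def)

lemma hdist_transl: "hdist I (wadd x z) (wadd y z) = hdist I x y"
  unfolding hdist_def wadd_def by metis


lemma wadd_app: "wadd x y a = (x a \<noteq> y a)" by (simp add: wadd_def)

lemma Fdot_iff: "\<beta> \<in> Fdot m \<longleftrightarrow> \<beta> \<in> Fm m \<and> \<beta> \<noteq> zw" by (auto simp: Fdot_def)

lemma Ham_Fn: "c \<in> Ham m \<Longrightarrow> c \<in> Fn m" by (simp add: Ham_iff)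

lemma Ham_wadd: "c \<in> Ham m \<Longrightarrow> d \<in> Ham m \<Longrightarrow> wadd c d \<in> Ham m"
  by (simp add: Ham_iff syn_wadd wadd_space)

lemma Fdot_wadd: "\<beta> \<in> Fdot m \<Longrightarrow> \<iota> \<in> Fdot m \<Longrightarrow> \<beta> \<noteq> \<iota> \<Longrightarrow> wadd \<beta> \<iota> \<in> Fdot m"
  by (auto simp: Fdot_iff wadd_space wadd_eq_iff)

lemma ham_exists: "x \<in> Fn m \<Longrightarrow> \<exists>c\<in>Ham m. near m x c"
proof -
  assume x: "x \<in> Fn m"
  show ?thesis
  proof (cases "syn m x = zw")
    case True
    then have "x \<in> Ham m" using x by (simp add: Ham_iff)
    then show ?thesis using near_iff2[OF x x] by blast
  next
    case False
    let ?b = "syn m x"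
    have b: "?b \<in> Fdot m" using False syn_Fm by (simp add: Fdot_iff)
    let ?c = "wadd x (ew ?b)"
    have c: "?c \<in> Ham m" using x b by (simp add: Ham_iff syn_wadd syn_ew wadd_space ew_Fn)
    have "x = wadd ?c (ew ?b)" by (simp add: wadd_ac)
    then have "near m x ?c" using near_iff2[OF x Ham_Fn[OF c]] b by blast
    then show ?thesis using c by blast
  qed
qed

lemma ham_unique:
  assumes x: "x \<in> Fn m" and c: "c \<in> Ham m" and d: "d \<in> Ham m"
    and nc: "near m x c" and nd: "near m x d"
  shows "c = d"
proof -
  have sc: "syn m c = zw" "syn m d = zw" using c d by (auto simp: Ham_iff)
  from nc near_iff2[OF x Ham_Fn[OF c]] have
    A: "x = c \<or> (\<exists>\<beta>\<in>Fdot m. x = wadd c (ew \<beta>))" by blast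
  from nd near_iff2[OF x Ham_Fn[OF d]] have
    B: "x = d \<or> (\<exists>\<beta>\<in>Fdot m. x = wadd d (ew \<beta>))" by blast
  have zz: "\<And>\<beta>. \<beta> \<in> Fdot m \<Longrightarrow> \<beta> \<noteq> zw" by (simp add: Fdot_iff)
  have K: "\<And>\<beta> \<beta>'. \<beta> \<in> Fdot m \<Longrightarrow> \<beta>' \<in> Fdot m \<Longrightarrow> wadd c (ew \<beta>) = wadd d (ew \<beta>') \<Longrightarrow> c = d"
  proof -
    fix \<beta> \<beta>' assume b: "\<beta> \<in> Fdot m" "\<beta>' \<in> Fdot m" and e: "wadd c (ew \<beta>) = wadd d (ew \<beta>')"
    have "syn m (wadd c (ew \<beta>)) = syn m (wadd d (ew \<beta>'))" using e by simp
    then have "\<beta> = \<beta>'" using b sc by (simp add: syn_wadd syn_ew)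
    then show "c = d" using e by (metis wadd_ac(1) wadd_self2)
  qed
  show ?thesis
    using A B sc zz K by (auto simp: syn_wadd syn_ew)
qed

lemma R_Ham: "c \<in> R m \<iota> \<Longrightarrow> c \<in> Ham m" by (simp add: R_def)

lemma zw_R: "zw \<in> R m \<iota>"
proof -
  have "zw \<in> Ham m" by (simp add: Ham_iff)
  moreover have "\<forall>\<alpha>\<in>Fm m - {zw, \<iota>}. zw \<alpha> = zw (wadd \<alpha> \<iota>)" by (simp add: zw_def)
  ultimately show ?thesis by (simp add: R_def)
qed

lemma R_wadd: "c \<in> R m \<iota> \<Longrightarrow> d \<in> R m \<iota> \<Longrightarrow> wadd c d \<in> R m \<iota>"
proof -
  assume c: "c \<in> R m \<iota>" and d: "d \<in> R m \<iota>"
  have "\<forall>\<alpha>\<in>Fm m - {zw, \<iota>}. wadd c d \<alpha> = wadd c d (wadd \<alpha> \<iota>)"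
    using c d by (simp add: R_def wadd_def[of c d])
  then show ?thesis using c d by (simp add: R_def Ham_wadd)
qed

lemma v_Ham: "\<iota> \<in> Fdot m \<Longrightarrow> wadd (hat m \<iota>) (ew \<iota>) \<in> Ham m"
  by (simp add: Ham_iff syn_wadd syn_ew syn_hat Fdot_iff hat_Fn ew_Fn wadd_space)

lemma w_R:
  assumes i: "\<iota> \<in> Fdot m" and b: "\<beta> \<in> Fdot m" and ne: "\<beta> \<noteq> \<iota>"
  shows "wadd (ew \<iota>) (wadd (ew \<beta>) (ew (wadd \<beta> \<iota>))) \<in> R m \<iota>"
proof -
  have bi: "wadd \<beta> \<iota> \<in> Fdot m" using Fdot_wadd[OF b i ne] .
  have H: "wadd (ew \<iota>) (wadd (ew \<beta>) (ew (wadd \<beta> \<iota>))) \<in> Ham m"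
    using i b bi by (simp add: Ham_iff syn_wadd syn_ew ew_Fn wadd_space wadd_ac)
  have e1: "\<And>\<alpha>. (wadd \<alpha> \<iota> = \<iota>) = (\<alpha> = zw)" by (auto simp: wadd_def zw_def fun_eq_iff)
  have e2: "\<And>\<alpha>. (wadd \<alpha> \<iota> = \<beta>) = (\<alpha> = wadd \<beta> \<iota>)" by (auto simp: wadd_def fun_eq_iff)
  have e3: "\<And>\<alpha>. (wadd \<alpha> \<iota> = wadd \<beta> \<iota>) = (\<alpha> = \<beta>)" by (auto simp: wadd_def fun_eq_iff)
  have P: "\<forall>\<alpha>\<in>Fm m - {zw, \<iota>}. wadd (ew \<iota>) (wadd (ew \<beta>) (ew (wadd \<beta> \<iota>))) \<alpha>
     = wadd (ew \<iota>) (wadd (ew \<beta>) (ew (wadd \<beta> \<iota>))) (wadd \<alpha> \<iota>)"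
  proof
    fix \<alpha> assume a: "\<alpha> \<in> Fm m - {zw, \<iota>}"
    show "wadd (ew \<iota>) (wadd (ew \<beta>) (ew (wadd \<beta> \<iota>))) \<alpha>
     = wadd (ew \<iota>) (wadd (ew \<beta>) (ew (wadd \<beta> \<iota>))) (wadd \<alpha> \<iota>)"
      apply (simp only: wadd_app ew_def e1 e2 e3)
      using a by auto
  qed
  show ?thesis using H P unfolding R_def by blast
qed


definition T :: "nat \<Rightarrow> vec \<Rightarrow> word set" where
  "T m \<iota> = translate (R m \<iota>) (wadd (hat m \<iota>) (ew \<iota>))"
definition T' :: "nat \<Rightarrow> vec \<Rightarrow> word set" where
  "T' m \<iota> = translate (R m \<iota>) (hat m \<iota>)"

lemma T_Ham: "\<iota> \<in> Fdot m \<Longrightarrow> t \<in> T m \<iota> \<Longrightarrow> t \<in> Ham m"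
  by (auto simp: T_def translate_def intro: Ham_wadd R_Ham v_Ham)

lemma T'_Fn: "y \<in> T' m \<iota> \<Longrightarrow> y \<in> Fn m"
  by (auto simp: T'_def translate_def intro: wadd_space Ham_Fn R_Ham hat_Fn)

lemma T'_T: "y \<in> T' m \<iota> \<Longrightarrow> wadd y (ew \<iota>) \<in> T m \<iota>"
  by (auto simp: T'_def T_def translate_def wadd_assoc)

lemma near_intro: "x \<in> Fn m \<Longrightarrow> y \<in> Fn m \<Longrightarrow> x = y \<or> (\<exists>\<beta>\<in>Fdot m. x = wadd y (ew \<beta>)) \<Longrightarrow> near m x y"
  using near_iff2 by blast

lemma nb1:
  assumes i: "\<iota> \<in> Fdot m" and t: "t \<in> T m \<iota>" and x: "x \<in> Fn m" and n: "near m x t"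
  shows "\<exists>y\<in>T' m \<iota>. near m x y"
proof -
  obtain c where c: "c \<in> R m \<iota>" and tc: "t = wadd c (wadd (hat m \<iota>) (ew \<iota>))"
    using t by (auto simp: T_def translate_def)
  have tF: "t \<in> Fn m" using T_Ham[OF i t] Ham_Fn by blast
  have cases: "x = t \<or> (\<exists>\<beta>\<in>Fdot m. x = wadd t (ew \<beta>))" using near_iff2[OF x tF] n by blast
  show ?thesis
  proof (cases "x = t")
    case True
    let ?y = "wadd c (hat m \<iota>)"
    have y: "?y \<in> T' m \<iota>" using c by (auto simp: T'_def translate_def)
    have "x = wadd ?y (ew \<iota>)" using True tc by (simp add: wadd_assoc)
    then have "near m x ?y" using near_intro[OF x T'_Fn[OF y]] i by blast
    then show ?thesis using y by blast
  next
    case False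
    then obtain \<beta> where b: "\<beta> \<in> Fdot m" and xb: "x = wadd t (ew \<beta>)" using cases by blast
    show ?thesis
    proof (cases "\<beta> = \<iota>")
      case True
      have y: "x \<in> T' m \<iota>" using c xb tc True
        by (auto simp: T'_def translate_def wadd_assoc)
      then show ?thesis using near_intro[OF x x] by blast
    next
      case False
      let ?w = "wadd (ew \<iota>) (wadd (ew \<beta>) (ew (wadd \<beta> \<iota>)))"
      let ?y = "wadd (wadd c ?w) (hat m \<iota>)"
      have y: "?y \<in> T' m \<iota>" using R_wadd[OF c w_R[OF i b False]] by (auto simp: T'_def translate_def)
      have "x = wadd ?y (ew (wadd \<beta> \<iota>))" using xb tc by (simp add: wadd_ac)
      then have "near m x ?y" using near_intro[OF x T'_Fn[OF y]] Fdot_wadd[OF b i False] by blast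
      then show ?thesis using y by blast
    qed
  qed
qed

lemma nb2:
  assumes i: "\<iota> \<in> Fdot m" and y: "y \<in> T' m \<iota>" and x: "x \<in> Fn m" and n: "near m x y"
  shows "\<exists>t\<in>T m \<iota>. near m x t"
proof -
  obtain c where c: "c \<in> R m \<iota>" and yc: "y = wadd c (hat m \<iota>)"
    using y by (auto simp: T'_def translate_def)
  have yF: "y \<in> Fn m" using T'_Fn[OF y] .
  have cases: "x = y \<or> (\<exists>\<beta>\<in>Fdot m. x = wadd y (ew \<beta>))" using near_iff2[OF x yF] n by blast
  show ?thesis
  proof (cases "x = y")
    case True
    let ?t = "wadd c (wadd (hat m \<iota>) (ew \<iota>))"
    have t: "?t \<in> T m \<iota>" using c by (auto simp: T_def translate_def)
    have "x = wadd ?t (ew \<iota>)" using True yc by (simp add: wadd_ac)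
    then have "near m x ?t" using near_intro[OF x Ham_Fn[OF T_Ham[OF i t]]] i by blast
    then show ?thesis using t by blast
  next
    case False
    then obtain \<beta> where b: "\<beta> \<in> Fdot m" and xb: "x = wadd y (ew \<beta>)" using cases by blast
    show ?thesis
    proof (cases "\<beta> = \<iota>")
      case True
      have t: "x \<in> T m \<iota>" using c xb yc True
        by (auto simp: T_def translate_def wadd_assoc)
      then show ?thesis using near_intro[OF x x] by blast
    next
      case False
      let ?w = "wadd (ew \<iota>) (wadd (ew \<beta>) (ew (wadd \<beta> \<iota>)))"
      let ?t = "wadd (wadd c ?w) (wadd (hat m \<iota>) (ew \<iota>))"
      have t: "?t \<in> T m \<iota>" using R_wadd[OF c w_R[OF i b False]] by (auto simp: T_def translate_def)
      have "x = wadd ?t (ew (wadd \<beta> \<iota>))" using xb yc by (simp add: wadd_ac)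
      then have "near m x ?t" using near_intro[OF x Ham_Fn[OF T_Ham[OF i t]]] Fdot_wadd[OF b i False] by blast
      then show ?thesis using t by blast
    qed
  qed
qed

lemma T'_code:
  assumes i: "\<iota> \<in> Fdot m" and y: "y \<in> T' m \<iota>" and y': "y' \<in> T' m \<iota>" and x: "x \<in> Fn m"
    and n: "near m x y" and n': "near m x y'"
  shows "y = y'"
proof -
  have x2: "wadd x (ew \<iota>) \<in> Fn m" using x ew_Fn[OF i] wadd_space by blast
  have "wadd y (ew \<iota>) = wadd y' (ew \<iota>)"
    using ham_unique[OF x2 T_Ham[OF i T'_T[OF y]] T_Ham[OF i T'_T[OF y']]] n n'
    by (simp add: hdist_transl)
  then show ?thesis by (metis wadd_ac(1) wadd_self2)
qed


lemma wadd_eq_iff2: "wadd x y = z \<longleftrightarrow> x = wadd z y" by (auto simp: wadd_def fun_eq_iff)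

lemma condR:
  assumes u: "u \<in> T m \<iota>" and a: "\<alpha> \<in> Fm m - {zw, \<iota>}"
  shows "(u \<alpha> \<noteq> wadd (hat m \<iota>) (ew \<iota>) \<alpha>) =
         (u (wadd \<alpha> \<iota>) \<noteq> wadd (hat m \<iota>) (ew \<iota>) (wadd \<alpha> \<iota>))"
proof -
  obtain c where c: "c \<in> R m \<iota>" and uc: "u = wadd c (wadd (hat m \<iota>) (ew \<iota>))"
    using u by (auto simp: T_def translate_def)
  have "c \<alpha> = c (wadd \<alpha> \<iota>)" using c a by (auto simp: R_def)
  then show ?thesis using uc by (auto simp: wadd_app)
qed

lemma hat_unitv: "i < m \<Longrightarrow> hat m \<iota> (unitv i) = \<iota> i"
  by (auto simp: hat_def)

lemma hat_nonunit: "\<forall>j. \<beta> \<noteq> unitv j \<Longrightarrow> \<not> hat m \<iota> \<beta>"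
  by (auto simp: hat_def)

lemma unitv_Fm: "i < m \<Longrightarrow> unitv i \<in> Fm m"
  by (auto simp: space_def unitv_def)

lemma unitv_nz: "unitv i \<noteq> zw" by (auto simp: unitv_def zw_def fun_eq_iff)

lemma T_disj:
  assumes i: "\<iota> \<in> Fdot m" and k: "\<kappa> \<in> Fdot m" and im: "i < m" and ii: "\<iota> i" and ki: "\<not> \<kappa> i"
    and wi: "\<forall>j l. \<iota> \<noteq> wadd (unitv j) (unitv l)" and ui: "\<forall>j. \<iota> \<noteq> unitv j"
    and wk: "\<forall>j l. \<kappa> \<noteq> wadd (unitv j) (unitv l)" and uk: "\<forall>j. \<kappa> \<noteq> unitv j"
    and wik: "\<forall>j l. wadd \<iota> \<kappa> \<noteq> wadd (unitv j) (unitv l)" and uik: "\<forall>j. wadd \<iota> \<kappa> \<noteq> unitv j"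
    and u1: "u \<in> T m \<iota>" and u2: "u \<in> T m \<kappa>"
  shows False
proof -
  define a where "a = unitv i"
  define b where "b = wadd (wadd a \<iota>) \<kappa>"
  have iF: "\<iota> \<in> Fm m" "\<iota> \<noteq> zw" and kF: "\<kappa> \<in> Fm m" "\<kappa> \<noteq> zw" using i k by (auto simp: Fdot_iff)
  have aF: "a \<in> Fm m" using im unitv_Fm a_def by simp
  have anz: "a \<noteq> zw" using unitv_nz a_def by simp
  have ai: "a \<noteq> \<iota>" using ui a_def by metis
  have ak: "a \<noteq> \<kappa>" using uk a_def by metis
  have aik: "a \<noteq> wadd \<iota> \<kappa>" using uik a_def by metis
  have b_eq: "wadd (wadd a \<kappa>) \<iota> = b" by (simp add: b_def wadd_ac)
  have akF: "wadd a \<kappa> \<in> Fm m" and aiF: "wadd a \<iota> \<in> Fm m" using aF iF kF wadd_space by auto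
  have ak1: "wadd a \<kappa> \<noteq> zw" using ak by (auto simp: wadd_eq_iff)
  have ak2: "wadd a \<kappa> \<noteq> \<iota>" using aik by (metis wadd_ac(1) wadd_eq_iff)
  have ai1: "wadd a \<iota> \<noteq> zw" using ai by (auto simp: wadd_eq_iff)
  have ai2: "wadd a \<iota> \<noteq> \<kappa>" using aik by (metis wadd_eq_iff2 wadd_ac(1))
  have ai3: "wadd a \<iota> \<noteq> \<iota>" using anz by (auto simp: wadd_eq_iff2)
  have ak3: "wadd a \<kappa> \<noteq> \<kappa>" using anz by (auto simp: wadd_eq_iff2)
  have b1: "b \<noteq> \<iota>" using ak1 b_eq by (auto simp: wadd_eq_iff2)
  have b2: "b \<noteq> \<kappa>" using ai1 b_def by (auto simp: wadd_eq_iff2)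
  have nu1: "\<forall>j. wadd a \<iota> \<noteq> unitv j"
  proof
    fix j show "wadd a \<iota> \<noteq> unitv j" using wi a_def by (metis wadd_eq_iff)
  qed
  have nu2: "\<forall>j. wadd a \<kappa> \<noteq> unitv j"
  proof
    fix j show "wadd a \<kappa> \<noteq> unitv j" using wk a_def by (metis wadd_eq_iff)
  qed
  have nu3: "\<forall>j. b \<noteq> unitv j"
  proof
    fix j show "b \<noteq> unitv j"
    proof
      assume "b = unitv j"
      moreover have "wadd a b = wadd \<iota> \<kappa>" by (simp add: b_def wadd_assoc)
      ultimately have "wadd \<iota> \<kappa> = wadd a (unitv j)" by simp
      then show False using wik a_def by simp
    qed
  qed
  have E1: "(u a \<noteq> wadd (hat m \<iota>) (ew \<iota>) a) = (u (wadd a \<iota>) \<noteq> wadd (hat m \<iota>) (ew \<iota>) (wadd a \<iota>))"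
    using condR[OF u1, of a] aF anz ai by simp
  have E2: "(u (wadd a \<kappa>) \<noteq> wadd (hat m \<iota>) (ew \<iota>) (wadd a \<kappa>)) = (u b \<noteq> wadd (hat m \<iota>) (ew \<iota>) b)"
    using condR[OF u1, of "wadd a \<kappa>"] akF ak1 ak2 b_eq by simp
  have E3: "(u a \<noteq> wadd (hat m \<kappa>) (ew \<kappa>) a) = (u (wadd a \<kappa>) \<noteq> wadd (hat m \<kappa>) (ew \<kappa>) (wadd a \<kappa>))"
    using condR[OF u2, of a] aF anz ak by simp
  have E4: "(u (wadd a \<iota>) \<noteq> wadd (hat m \<kappa>) (ew \<kappa>) (wadd a \<iota>)) = (u b \<noteq> wadd (hat m \<kappa>) (ew \<kappa>) b)"
    using condR[OF u2, of "wadd a \<iota>"] aiF ai1 ai2 b_def by simp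
  have V: "wadd (hat m \<iota>) (ew \<iota>) a" "\<not> wadd (hat m \<iota>) (ew \<iota>) (wadd a \<iota>)"
     "\<not> wadd (hat m \<iota>) (ew \<iota>) (wadd a \<kappa>)" "\<not> wadd (hat m \<iota>) (ew \<iota>) b"
     "\<not> wadd (hat m \<kappa>) (ew \<kappa>) a" "\<not> wadd (hat m \<kappa>) (ew \<kappa>) (wadd a \<kappa>)"
     "\<not> wadd (hat m \<kappa>) (ew \<kappa>) (wadd a \<iota>)" "\<not> wadd (hat m \<kappa>) (ew \<kappa>) b"
    using hat_unitv[OF im] hat_nonunit[OF nu1] hat_nonunit[OF nu2] hat_nonunit[OF nu3]
      ai ak ai3 ak2 b1 ak3 ai2 b2 ii ki a_def
    by (auto simp: wadd_app ew_def)
  show False using E1 E2 E3 E4 V by auto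
qed

lemma zero_notin_T:
  assumes k: "\<kappa> \<in> Fdot m" and uk: "\<forall>j. \<kappa> \<noteq> unitv j"
    and wk: "\<forall>j l. \<kappa> \<noteq> wadd (unitv j) (unitv l)"
  shows "zw \<notin> T m \<kappa>"
proof
  assume z: "zw \<in> T m \<kappa>"
  have kF: "\<kappa> \<in> Fm m" "\<kappa> \<noteq> zw" using k by (auto simp: Fdot_iff)
  then obtain i where ki: "\<kappa> i" by (auto simp: zw_def fun_eq_iff)
  then have im: "i < m" using kF by (auto simp: space_def)
  define a where "a = unitv i"
  have aF: "a \<in> Fm m" using im unitv_Fm a_def by simp
  have anz: "a \<noteq> zw" using unitv_nz a_def by simp
  have ak: "a \<noteq> \<kappa>" using uk a_def by metis
  have ak3: "wadd a \<kappa> \<noteq> \<kappa>" using anz by (auto simp: wadd_eq_iff2)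
  have nu2: "\<forall>j. wadd a \<kappa> \<noteq> unitv j"
  proof
    fix j show "wadd a \<kappa> \<noteq> unitv j" using wk a_def by (metis wadd_eq_iff)
  qed
  have E: "(zw a \<noteq> wadd (hat m \<kappa>) (ew \<kappa>) a) = (zw (wadd a \<kappa>) \<noteq> wadd (hat m \<kappa>) (ew \<kappa>) (wadd a \<kappa>))"
    using condR[OF z, of a] aF anz ak by simp
  have V: "wadd (hat m \<kappa>) (ew \<kappa>) a" "\<not> wadd (hat m \<kappa>) (ew \<kappa>) (wadd a \<kappa>)"
    using hat_unitv[OF im] hat_nonunit[OF nu2] ak ak3 ki a_def by (auto simp: wadd_app ew_def)
  show False using E V by (simp add: zw_def)
qed

lemma code_facts:
  assumes C: "one_code {..<m} C" and i: "\<iota> \<in> C" and k: "\<kappa> \<in> C" and ne: "\<iota> \<noteq> \<kappa>"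
  shows "(\<forall>j l. wadd \<iota> \<kappa> \<noteq> wadd (unitv j) (unitv l)) \<and> (\<forall>j. wadd \<iota> \<kappa> \<noteq> unitv j)"
proof -
  have iF: "\<iota> \<in> Fm m" and kF: "\<kappa> \<in> Fm m" using C i k by (auto simp: one_code_def)
  have far: "\<And>x. x \<in> Fm m \<Longrightarrow> hdist {..<m} x \<iota> \<le> 1 \<Longrightarrow> hdist {..<m} x \<kappa> \<le> 1 \<Longrightarrow> False"
  proof -
    fix x assume "x \<in> Fm m" "hdist {..<m} x \<iota> \<le> 1" "hdist {..<m} x \<kappa> \<le> 1"
    then have "x \<in> nbhd {..<m} {\<iota>} \<inter> nbhd {..<m} {\<kappa>}" by (auto simp: nbhd_def)
    then show False using C i k ne by (auto simp: one_code_def)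
  qed
  have nr: "\<And>x y j. x \<in> Fm m \<Longrightarrow> y \<in> Fm m \<Longrightarrow> j < m \<Longrightarrow> x = wadd y (unitv j) \<Longrightarrow> hdist {..<m} x y \<le> 1"
    using near_iff[of "{..<m}"] by (auto simp: unitv_def)
  have nr0: "\<And>x. hdist {..<m} x x \<le> 1" by (simp add: hdist_def)
  have ikz: "wadd \<iota> \<kappa> \<noteq> zw" using ne by (auto simp: wadd_eq_iff2)
  have lt: "\<And>j. wadd \<iota> \<kappa> j \<Longrightarrow> j < m" using iF kF by (auto simp: space_def wadd_def)
  have P1: "\<forall>j. wadd \<iota> \<kappa> \<noteq> unitv j"
  proof (intro allI notI)
    fix j assume e: "wadd \<iota> \<kappa> = unitv j"
    then have jm: "j < m" using lt by (auto simp: unitv_def)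
    have "\<iota> = wadd \<kappa> (unitv j)" using e by (metis wadd_ac(1) wadd_eq_iff)
    then show False using far[OF iF nr0 nr[OF iF kF jm]] by blast
  qed
  have P2: "\<forall>j l. wadd \<iota> \<kappa> \<noteq> wadd (unitv j) (unitv l)"
  proof (intro allI notI)
    fix j l assume e: "wadd \<iota> \<kappa> = wadd (unitv j) (unitv l)"
    have jl: "j \<noteq> l" using e ikz by auto
    have "wadd \<iota> \<kappa> j" "wadd \<iota> \<kappa> l" using jl by (subst e, simp add: wadd_app unitv_def)+
    then have jm: "j < m" and lm: "l < m" using lt by auto
    define x where "x = wadd \<iota> (unitv j)"
    have xF: "x \<in> Fm m" using x_def iF unitv_Fm[OF jm] wadd_space by blast
    have "x = wadd \<kappa> (unitv l)" using e unfolding x_def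
      by (metis wadd_ac(1) wadd_ac(3) wadd_eq_iff)
    then show False using far[OF xF nr[OF xF iF jm] nr[OF xF kF lm]] x_def by (simp add: wadd_ac)
  qed
  show ?thesis using P1 P2 by blast
qed


lemma op_iff:
  assumes "P \<subseteq> space I"
    and "\<forall>x\<in>space I. \<exists>c\<in>P. hdist I x c \<le> 1"
    and "\<forall>x\<in>space I. \<forall>c\<in>P. \<forall>d\<in>P. hdist I x c \<le> 1 \<longrightarrow> hdist I x d \<le> 1 \<longrightarrow> c = d"
  shows "one_perfect I P"
  using assms unfolding one_perfect_def one_code_def nbhd_def by blast

lemma hat_zw: "hat m zw = zw" by (simp add: hat_def zw_def)

theorem mainTheorem1:
  fixes m :: nat and C :: "vec set"
  assumes "m \<ge> 1"
    and "one_code {..<m} C"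
    and "zw \<in> C"
  shows "one_perfect (Fdot m) (PC m C) \<and> C = {\<iota> \<in> Fm m. hat m \<iota> \<in> PC m C}"
proof -
  note code = assms(2)
  define Cd where "Cd = C - {zw}"
  have PCeq: "PC m C = (Ham m - (\<Union>\<iota>\<in>Cd. T m \<iota>)) \<union> (\<Union>\<iota>\<in>Cd. T' m \<iota>)"
    by (simp add: PC_def T_def T'_def Cd_def)
  have CF: "C \<subseteq> Fm m" using code by (simp add: one_code_def)
  have CdF: "\<And>\<iota>. \<iota> \<in> Cd \<Longrightarrow> \<iota> \<in> Fdot m" using CF by (auto simp: Cd_def Fdot_iff)
  have wt: "\<And>\<iota>. \<iota> \<in> Cd \<Longrightarrow> (\<forall>j l. \<iota> \<noteq> wadd (unitv j) (unitv l)) \<and> (\<forall>j. \<iota> \<noteq> unitv j)"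
  proof -
    fix \<iota> assume "\<iota> \<in> Cd"
    then show "(\<forall>j l. \<iota> \<noteq> wadd (unitv j) (unitv l)) \<and> (\<forall>j. \<iota> \<noteq> unitv j)"
      using code_facts[OF code _ assms(3), of \<iota>] by (auto simp: Cd_def)
  qed
  have disj: "\<And>\<iota> \<kappa> u. \<iota> \<in> Cd \<Longrightarrow> \<kappa> \<in> Cd \<Longrightarrow> u \<in> T m \<iota> \<Longrightarrow> u \<in> T m \<kappa> \<Longrightarrow> \<iota> = \<kappa>"
  proof (rule ccontr)
    fix \<iota> \<kappa> u assume i: "\<iota> \<in> Cd" and k: "\<kappa> \<in> Cd" and u1: "u \<in> T m \<iota>" and u2: "u \<in> T m \<kappa>"
      and ne: "\<iota> \<noteq> \<kappa>"
    obtain i where d: "\<iota> i \<noteq> \<kappa> i" using ne by (auto simp: fun_eq_iff)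
    have im: "i < m" using d CF i k by (auto simp: Cd_def space_def)
    have cf1: "(\<forall>j l. wadd \<iota> \<kappa> \<noteq> wadd (unitv j) (unitv l)) \<and> (\<forall>j. wadd \<iota> \<kappa> \<noteq> unitv j)"
      using code_facts[OF code _ _ ne] i k by (auto simp: Cd_def)
    have cf2: "(\<forall>j l. wadd \<kappa> \<iota> \<noteq> wadd (unitv j) (unitv l)) \<and> (\<forall>j. wadd \<kappa> \<iota> \<noteq> unitv j)"
      using cf1 by (simp add: wadd_ac)
    show False
    proof (cases "\<iota> i")
      case True
      then show False using T_disj[OF CdF[OF i] CdF[OF k] im True _ _ _ _ _ _ _ u1 u2] d wt[OF i] wt[OF k] cf1
        by blast
    next
      case False
      then show False using T_disj[OF CdF[OF k] CdF[OF i] im _ False _ _ _ _ _ _ u2 u1] d wt[OF i] wt[OF k] cf2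
        by blast
    qed
  qed
  have PCF: "PC m C \<subseteq> Fn m"
    unfolding PCeq using Ham_Fn T'_Fn by blast
  have classify: "\<And>x c p. x \<in> Fn m \<Longrightarrow> c \<in> Ham m \<Longrightarrow> near m x c \<Longrightarrow> p \<in> PC m C \<Longrightarrow> near m x p \<Longrightarrow>
      (p \<in> Ham m - (\<Union>\<iota>\<in>Cd. T m \<iota>) \<and> p = c) \<or> (\<exists>\<iota>\<in>Cd. p \<in> T' m \<iota> \<and> c \<in> T m \<iota>)"
  proof -
    fix x c p assume x: "x \<in> Fn m" and c: "c \<in> Ham m" and nc: "near m x c" and p: "p \<in> PC m C"
      and np: "near m x p"
    show "(p \<in> Ham m - (\<Union>\<iota>\<in>Cd. T m \<iota>) \<and> p = c) \<or> (\<exists>\<iota>\<in>Cd. p \<in> T' m \<iota> \<and> c \<in> T m \<iota>)"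
    proof (cases "p \<in> Ham m - (\<Union>\<iota>\<in>Cd. T m \<iota>)")
      case True
      then have "p = c" using ham_unique[OF x _ c np nc] by blast
      then show ?thesis using True by blast
    next
      case False
      then obtain \<iota> where i: "\<iota> \<in> Cd" and pi: "p \<in> T' m \<iota>" using p unfolding PCeq by blast
      obtain t where t: "t \<in> T m \<iota>" and nt: "near m x t" using nb2[OF CdF[OF i] pi x np] by blast
      have "t = c" using ham_unique[OF x T_Ham[OF CdF[OF i] t] c nt nc] .
      then show ?thesis using i pi t by blast
    qed
  qed
  have P1: "one_perfect (Fdot m) (PC m C)"
  proof (rule op_iff[OF PCF])
    show "\<forall>x\<in>Fn m. \<exists>c\<in>PC m C. near m x c"
    proof
      fix x assume x: "x \<in> Fn m"
      obtain c where c: "c \<in> Ham m" and nc: "near m x c" using ham_exists[OF x] by blast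
      show "\<exists>c\<in>PC m C. near m x c"
      proof (cases "c \<in> (\<Union>\<iota>\<in>Cd. T m \<iota>)")
        case True
        then obtain \<iota> where i: "\<iota> \<in> Cd" and ci: "c \<in> T m \<iota>" by blast
        obtain y where "y \<in> T' m \<iota>" "near m x y" using nb1[OF CdF[OF i] ci x nc] by blast
        then show ?thesis using i unfolding PCeq by blast
      next
        case False
        then show ?thesis using c nc unfolding PCeq by blast
      qed
    qed
    show "\<forall>x\<in>Fn m. \<forall>p\<in>PC m C. \<forall>q\<in>PC m C. near m x p \<longrightarrow> near m x q \<longrightarrow> p = q"
    proof (intro ballI impI)
      fix x p q assume x: "x \<in> Fn m" and p: "p \<in> PC m C" and q: "q \<in> PC m C"
        and np: "near m x p" and nq: "near m x q"
      obtain c where c: "c \<in> Ham m" and nc: "near m x c" using ham_exists[OF x] by blast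
      note A = classify[OF x c nc p np] and B = classify[OF x c nc q nq]
      show "p = q"
      proof (cases "p \<in> Ham m - (\<Union>\<iota>\<in>Cd. T m \<iota>) \<and> p = c")
        case True
        then have "c \<notin> (\<Union>\<iota>\<in>Cd. T m \<iota>)" by blast
        then have "q = c" using B by blast
        then show ?thesis using True by simp
      next
        case False
        then obtain \<iota> where i: "\<iota> \<in> Cd" and pi: "p \<in> T' m \<iota>" and ci: "c \<in> T m \<iota>" using A by blast
        then have "c \<in> (\<Union>\<iota>\<in>Cd. T m \<iota>)" by blast
        then obtain \<kappa> where k: "\<kappa> \<in> Cd" and qk: "q \<in> T' m \<kappa>" and ck: "c \<in> T m \<kappa>" using B by blast
        have "\<iota> = \<kappa>" using disj[OF i k ci ck] .
        then show ?thesis using T'_code[OF CdF[OF i] pi _ x np nq] qk by blast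
      qed
    qed
  qed
  have P2: "C = {\<iota> \<in> Fm m. hat m \<iota> \<in> PC m C}"
  proof
    show "C \<subseteq> {\<iota> \<in> Fm m. hat m \<iota> \<in> PC m C}"
    proof
      fix \<iota> assume i: "\<iota> \<in> C"
      have "hat m \<iota> \<in> PC m C"
      proof (cases "\<iota> = zw")
        case True
        have "zw \<notin> (\<Union>\<kappa>\<in>Cd. T m \<kappa>)"
          using zero_notin_T CdF wt by blast
        moreover have "zw \<in> Ham m" by (simp add: Ham_iff)
        ultimately show ?thesis using True hat_zw unfolding PCeq by auto
      next
        case False
        then have "\<iota> \<in> Cd" using i Cd_def by simp
        moreover have "hat m \<iota> \<in> T' m \<iota>" using zw_R[of m \<iota>]
          unfolding T'_def translate_def by (metis image_eqI wadd_zw(2))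
        ultimately show ?thesis unfolding PCeq by blast
      qed
      then show "\<iota> \<in> {\<iota> \<in> Fm m. hat m \<iota> \<in> PC m C}" using i CF by blast
    qed
    show "{\<iota> \<in> Fm m. hat m \<iota> \<in> PC m C} \<subseteq> C"
    proof
      fix \<iota> assume "\<iota> \<in> {\<iota> \<in> Fm m. hat m \<iota> \<in> PC m C}"
      then have iF: "\<iota> \<in> Fm m" and h: "hat m \<iota> \<in> PC m C" by auto
      show "\<iota> \<in> C"
      proof (cases "\<iota> = zw")
        case True then show ?thesis using assms(3) by simp
      next
        case False
        have "hat m \<iota> \<notin> Ham m" using False syn_hat[OF iF] by (simp add: Ham_iff)
        then obtain \<kappa> where k: "\<kappa> \<in> Cd" and hk: "hat m \<iota> \<in> T' m \<kappa>" using h unfolding PCeq by blast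
        then obtain c where c: "c \<in> R m \<kappa>" and e: "hat m \<iota> = wadd c (hat m \<kappa>)"
          by (auto simp: T'_def translate_def)
        have "syn m (hat m \<iota>) = syn m (wadd c (hat m \<kappa>))" using e by simp
        then have "\<iota> = \<kappa>" using syn_hat[OF iF] syn_hat[of \<kappa> m] CdF[OF k] R_Ham[OF c]
          by (simp add: syn_wadd Ham_iff Fdot_iff)
        then show ?thesis using k Cd_def by simp
      qed
    qed
  qed
  show ?thesis using P1 P2 by blast
qed

end
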